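(* Let $g\ge2$ be an integer and $\Gamma=\langle 2,2g+1\rangle$ (the numerical semigroup generated by $2$ and $2g+1$, of genus $g$). Let $G(m)=m+1-2g+E(\Gamma,2)$. Then: \begin{itemize} \item for $m=2g+2k+1$ with $k\ge0$, $\delta^2_\Gamma(m)=G(m)$; \item for $m=2g+2k$ with $0\le k\le g-2$, $\delta^2_\Gamma(m)=G(m)+1$; \item $\delta^2_\Gamma(4g-2)=2g+1=G(4g-2)$. \end{itemize}
   Context: For a numerical semigroup $\Gamma$ (subset of $\mathbb N$ containing $0$, closed under addition, finite complement) with conductor $c$ (least $c$ with $c+\mathbb N\subseteq\Gamma$) and genus $g=|\mathbb N\setminus\Gamma|$: $D_\Gamma(x)=\{s\in\Gamma:x-s\in\Gamma\}$, $\delta^2_\Gamma(m)=\min\{|D_\Gamma(m_1)\cup D_\Gamma(m_2)|: m\le m_1<m_2,\ m_i\in\Gamma\}$, and the second Feng-Rao number $E(\Gamma,2)$ is the integer with $\delta^2_\Gamma(m)=m+1-2g+E(\Gamma,2)$ for all $m\ge 2c-1$. *)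

theory Defs
  imports Main
begin

definition genus :: "nat set \<Rightarrow> nat" where
  "genus S = card (UNIV - S)"

definition conductor :: "nat set \<Rightarrow> nat" where
  "conductor S = (LEAST c. \<forall>n\<ge>c. n \<in> S)"

definition Dset :: "nat set \<Rightarrow> nat \<Rightarrow> nat set" where
  "Dset S x = {s \<in> S. s \<le> x \<and> x - s \<in> S}"

definition delta2 :: "nat set \<Rightarrow> nat \<Rightarrow> nat" where
  "delta2 S m = Inf {card (Dset S m1 \<union> Dset S m2) | m1 m2.
                     m \<le> m1 \<and> m1 < m2 \<and> m1 \<in> S \<and> m2 \<in> S}"

definition FengRao2 :: "nat set \<Rightarrow> int" where
  "FengRao2 S = (THE e. \<forall>m. 2 * conductor S - 1 \<le> m \<longrightarrow>
      int (delta2 S m) = int m + 1 - 2 * int (genus S) + e)"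

definition semigroup2 :: "nat \<Rightarrow> nat \<Rightarrow> nat set" where
  "semigroup2 a b = {i * a + j * b | i j. True}"

end

theory Submission
  imports Defs
begin


definition GS :: "nat \<Rightarrow> nat set" where "GS g = {n. even n \<or> 2*g \<le> n}"
definition Ev :: "nat \<Rightarrow> nat set" where "Ev a = {s. even s \<and> s \<le> 2*a}"
definition Od :: "nat \<Rightarrow> nat \<Rightarrow> nat set" where "Od g b = {s. odd s \<and> 2*g+1 \<le> s \<and> s < 2*g+1+2*b}"

lemma GS_eq: "semigroup2 2 (2*g+1) = GS g"
proof
  show "semigroup2 2 (2*g+1) \<subseteq> GS g"
  proof
    fix n assume "n \<in> semigroup2 2 (2*g+1)"
    then obtain i j where n: "n = i*2 + j*(2*g+1)" by (auto simp: semigroup2_def)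
    show "n \<in> GS g"
    proof (cases "j = 0")
      case True thus ?thesis using n by (simp add: GS_def)
    next
      case False
      hence "2*g+1 \<le> j*(2*g+1)" by (cases j) auto
      hence "2*g \<le> n" using n by linarith
      thus ?thesis by (simp add: GS_def)
    qed
  qed
next
  show "GS g \<subseteq> semigroup2 2 (2*g+1)"
  proof
    fix n assume "n \<in> GS g"
    show "n \<in> semigroup2 2 (2*g+1)"
    proof (cases "even n")
      case True
      then obtain i where "n = i*2" by (metis evenE mult.commute)
      hence "n = i*2 + 0*(2*g+1)" by simp
      thus ?thesis unfolding semigroup2_def by blast
    next
      case False
      have "2*g \<le> n" using False \<open>n \<in> GS g\<close> by (auto simp: GS_def)
      moreover have "n \<noteq> 2*g" using False by auto
      ultimately have "2*g+1 \<le> n" by linarith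
      hence "even (n - (2*g+1))" using False by auto
      then obtain i where "n - (2*g+1) = i*2" by (metis evenE mult.commute)
      hence "n = i*2 + 1*(2*g+1)" using \<open>2*g+1 \<le> n\<close> by simp
      thus ?thesis unfolding semigroup2_def by blast
    qed
  qed
qed

lemma card_Ev: "card (Ev a) = a+1"
proof -
  have "Ev a = (\<lambda>i. 2*i) ` {..a}" by (auto simp: Ev_def elim!: evenE)
  moreover have "inj_on (\<lambda>i::nat. 2*i) {..a}" by (auto simp: inj_on_def)
  ultimately show ?thesis by (simp add: card_image)
qed

lemma card_Od: "card (Od g b) = b"
proof -
  have "Od g b = (\<lambda>i. 2*g+1+2*i) ` {..<b}"
  proof
    show "Od g b \<subseteq> (\<lambda>i. 2*g+1+2*i) ` {..<b}"
    proof
      fix s assume s: "s \<in> Od g b"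
      hence "odd s" "2*g+1 \<le> s" "s < 2*g+1+2*b" by (auto simp: Od_def)
      hence "even (s - (2*g+1))" by auto
      then obtain i where i: "s - (2*g+1) = 2*i" by (blast elim: evenE)
      hence "s = 2*g+1+2*i" "i < b" using \<open>2*g+1 \<le> s\<close> \<open>s < 2*g+1+2*b\<close> by auto
      thus "s \<in> (\<lambda>i. 2*g+1+2*i) ` {..<b}" by auto
    qed
  qed (auto simp: Od_def)
  moreover have "inj_on (\<lambda>i::nat. 2*g+1+2*i) {..<b}" by (auto simp: inj_on_def)
  ultimately show ?thesis by (simp add: card_image)
qed

lemma card_EvOd: "card (Ev a \<union> Od g b) = a+1+b"
proof -
  have "Ev a \<inter> Od g b = {}" by (auto simp: Ev_def Od_def)
  moreover have "finite (Ev a)" "finite (Od g b)" by (auto simp: Ev_def Od_def)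
  ultimately show ?thesis by (simp add: card_Un_disjoint card_Ev card_Od)
qed

lemma fin_D: "finite (Dset S x)" by (rule finite_subset[of _ "{..x}"]) (auto simp: Dset_def)

lemma lowerEO: "Ev a \<union> Od g b \<subseteq> X \<Longrightarrow> finite X \<Longrightarrow> a+1+b \<le> card X"
  using card_mono card_EvOd by metis

lemma upperEO: "X \<subseteq> Ev a \<union> Od g b \<Longrightarrow> card X \<le> a+1+b"
proof -
  assume "X \<subseteq> Ev a \<union> Od g b"
  moreover have "finite (Ev a \<union> Od g b)" by (auto simp: Ev_def Od_def)
  ultimately show ?thesis using card_mono card_EvOd by metis
qed



lemma memD_odd: assumes "s \<in> Dset (GS g) x" "odd x"
  shows "(even s \<and> s + 2*g \<le> x) \<or> (odd s \<and> 2*g+1 \<le> s \<and> s \<le> x)"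
proof -
  from assms(1) have s: "s \<in> GS g" "s \<le> x" "x - s \<in> GS g" by (auto simp: Dset_def)
  show ?thesis
  proof (cases "even s")
    case True
    hence "odd (x - s)" using assms(2) s(2) by auto
    hence "2*g \<le> x - s" using s(3) by (auto simp: GS_def)
    thus ?thesis using True s(2) by auto
  next
    case False
    hence "2*g \<le> s" using s(1) by (auto simp: GS_def)
    moreover have "s \<noteq> 2*g" using False by auto
    ultimately have "2*g+1 \<le> s" by linarith
    thus ?thesis using False s(2) by auto
  qed
qed
lemma memD_even: assumes "s \<in> Dset (GS g) x" "even x"
  shows "(even s \<and> s \<le> x) \<or> (odd s \<and> 2*g+1 \<le> s \<and> s + 2*g+1 \<le> x)"
proof -
  from assms(1) have s: "s \<in> GS g" "s \<le> x" "x - s \<in> GS g" by (auto simp: Dset_def)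
  show ?thesis
  proof (cases "even s")
    case True
    thus ?thesis using s(2) by auto
  next
    case False
    have o: "odd (x - s)" using assms(2) s(2) False by auto
    have a1: "2*g \<le> x - s" using s(3) o by (auto simp: GS_def)
    have a2: "x - s \<noteq> 2*g" using o by (metis even_mult_iff even_numeral)
    have b1: "2*g \<le> s" using False s(1) by (auto simp: GS_def)
    have b2: "s \<noteq> 2*g" using False by auto
    show ?thesis using False s(2) a1 a2 b1 b2 by auto
  qed
qed

lemma UB1: "card (Dset (GS g) (2*g+2*j+1) \<union> Dset (GS g) (2*g+2*j+3)) \<le> 2*j+4"
proof -
  have "Dset (GS g) (2*g+2*j+1) \<union> Dset (GS g) (2*g+2*j+3) \<subseteq> Ev (j+1) \<union> Od g (j+2)"
  proof
    fix s assume "s \<in> Dset (GS g) (2*g+2*j+1) \<union> Dset (GS g) (2*g+2*j+3)"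
    hence "(even s \<and> s + 2*g \<le> 2*g+2*j+3) \<or> (odd s \<and> 2*g+1 \<le> s \<and> s \<le> 2*g+2*j+3)"
    proof
      assume "s \<in> Dset (GS g) (2*g+2*j+1)"
      from memD_odd[OF this] show ?thesis by auto
    next
      assume "s \<in> Dset (GS g) (2*g+2*j+3)"
      from memD_odd[OF this] show ?thesis by auto
    qed
    thus "s \<in> Ev (j+1) \<union> Od g (j+2)"
    proof
      assume a: "even s \<and> s + 2*g \<le> 2*g+2*j+3"
      hence "s \<noteq> 2*j+3" by auto
      thus ?thesis using a by (auto simp: Ev_def)
    next
      assume "odd s \<and> 2*g + 1 \<le> s \<and> s \<le> 2*g+2*j+3"
      thus ?thesis by (auto simp: Od_def)
    qed
  qed
  from upperEO[OF this] show ?thesis by simp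
qed

lemma UB2: assumes "g \<ge> 1" shows "card (Dset (GS g) (4*g-2) \<union> Dset (GS g) (4*g)) \<le> 2*g+1"
proof -
  have "Dset (GS g) (4*g-2) \<union> Dset (GS g) (4*g) \<subseteq> Ev (2*g) \<union> Od g 0"
  proof
    fix s assume "s \<in> Dset (GS g) (4*g-2) \<union> Dset (GS g) (4*g)"
    hence "(even s \<and> s \<le> 4*g) \<or> (odd s \<and> 2*g+1 \<le> s \<and> s + 2*g+1 \<le> 4*g)"
      using memD_even[of s g "4*g-2"] memD_even[of s g "4*g"] assms by auto
    thus "s \<in> Ev (2*g) \<union> Od g 0" unfolding Ev_def Od_def by auto
  qed
  from upperEO[OF this] show ?thesis by simp
qed

lemma UB3: assumes "2*g \<le> t" shows "card (Dset (GS g) (2*t) \<union> Dset (GS g) (2*t+2)) \<le> 2*t+3-2*g"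
proof -
  have "Dset (GS g) (2*t) \<union> Dset (GS g) (2*t+2) \<subseteq> Ev (t+1) \<union> Od g (t+1-2*g)"
  proof
    fix s assume "s \<in> Dset (GS g) (2*t) \<union> Dset (GS g) (2*t+2)"
    hence "(even s \<and> s \<le> 2*t+2) \<or> (odd s \<and> 2*g+1 \<le> s \<and> s + 2*g+1 \<le> 2*t+2)"
      using memD_even[of s g "2*t"] memD_even[of s g "2*t+2"] by auto
    thus "s \<in> Ev (t+1) \<union> Od g (t+1-2*g)"
    proof
      assume a: "even s \<and> s \<le> 2*t+2"
      thus ?thesis by (auto simp: Ev_def)
    next
      assume "odd s \<and> 2*g + 1 \<le> s \<and> s + 2*g+1 \<le> 2*t+2"
      thus ?thesis using assms by (auto simp: Od_def)
    qed
  qed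
  from upperEO[OF this] show ?thesis using assms by simp
qed


lemma inD_ev: assumes "even s" "s \<le> x" "even x \<or> s + 2*g \<le> x" shows "s \<in> Dset (GS g) x"
proof -
  have "even (x - s) \<or> 2*g \<le> x - s"
  proof (cases "even x")
    case True thus ?thesis using assms(1) dvd_diff_nat by blast
  next
    case False thus ?thesis using assms(3) by linarith
  qed
  hence "x - s \<in> GS g" by (simp add: GS_def)
  moreover have "s \<in> GS g" using assms(1) by (simp add: GS_def)
  ultimately show ?thesis using assms(2) by (simp add: Dset_def)
qed
lemma inD_od: assumes "odd s" "2*g+1 \<le> s" "s \<le> x" "odd x \<or> s + 2*g \<le> x" shows "s \<in> Dset (GS g) x"
proof -
  have "even (x - s) \<or> 2*g \<le> x - s"
  proof (cases "odd x")
    case True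
    then obtain a where a: "x = 2*a+1" by (blast elim: oddE)
    obtain b where b: "s = 2*b+1" using assms(1) by (blast elim: oddE)
    have "x - s = 2*(a-b)" using a b assms(3) by simp
    thus ?thesis by simp
  next
    case False thus ?thesis using assms(4) by linarith
  qed
  hence "x - s \<in> GS g" by (simp add: GS_def)
  moreover have "s \<in> GS g" using assms(2) by (simp add: GS_def)
  ultimately show ?thesis using assms(3) by (simp add: Dset_def)
qed
lemma odd_GS: assumes "odd x" "x \<in> GS g" shows "\<exists>j. x = 2*g+2*j+1"
proof -
  have "2*g \<le> x" using assms by (simp add: GS_def)
  obtain a where a: "x = 2*a+1" using assms(1) by (blast elim: oddE)
  have "g \<le> a" using \<open>2*g \<le> x\<close> a by linarith
  hence "x = 2*g+2*(a-g)+1" using a by simp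
  thus ?thesis by blast
qed
lemma even_ge: assumes "even (x::nat)" "k \<le> x" "even k" shows "\<exists>j. x = k+2*j"
proof -
  obtain a where a: "x = 2*a" using assms(1) by (blast elim: evenE)
  obtain b where b: "k = 2*b" using assms(3) by (blast elim: evenE)
  have "x = k + 2*(a-b)" using a b assms(2) by simp
  thus ?thesis by blast
qed
lemma L1: assumes "odd x" "x \<in> GS g" shows "x+1-2*g \<le> card (Dset (GS g) x)"
proof -
  obtain j where x: "x = 2*g+2*j+1" using odd_GS[OF assms] by blast
  have "Ev j \<union> Od g (j+1) \<subseteq> Dset (GS g) x"
  proof
    fix s assume "s \<in> Ev j \<union> Od g (j+1)"
    thus "s \<in> Dset (GS g) x"
    proof
      assume "s \<in> Ev j" thus ?thesis unfolding x Ev_def by (intro inD_ev; auto)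
    next
      assume "s \<in> Od g (j+1)" thus ?thesis unfolding x Od_def by (intro inD_od; auto; presburger)
    qed
  qed
  from lowerEO[OF this fin_D] show ?thesis using x by simp
qed

lemma L2: assumes "even x" shows "x div 2 + 1 \<le> card (Dset (GS g) x)"
proof -
  have "Ev (x div 2) \<union> Od g 0 \<subseteq> Dset (GS g) x"
  proof
    fix s assume "s \<in> Ev (x div 2) \<union> Od g 0"
    hence "s \<in> Ev (x div 2)" by (auto simp: Od_def)
    thus "s \<in> Dset (GS g) x" unfolding Ev_def using assms by (intro inD_ev; auto)
  qed
  from lowerEO[OF this fin_D] show ?thesis by simp
qed

lemma L3: assumes "even x" "4*g \<le> x" shows "x+1-2*g \<le> card (Dset (GS g) x)"
proof -
  obtain j where x: "x = 4*g+2*j" using even_ge[OF assms(1,2)] by auto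
  have "Ev (2*g+j) \<union> Od g j \<subseteq> Dset (GS g) x"
  proof
    fix s assume "s \<in> Ev (2*g+j) \<union> Od g j"
    thus "s \<in> Dset (GS g) x"
    proof
      assume "s \<in> Ev (2*g+j)" thus ?thesis unfolding x Ev_def by (intro inD_ev; auto)
    next
      assume "s \<in> Od g j" thus ?thesis unfolding x Od_def by (intro inD_od; auto; presburger)
    qed
  qed
  from lowerEO[OF this fin_D] show ?thesis using x by simp
qed

lemma L4: assumes "even m" "2*g \<le> m" shows "m+2-g \<le> card (Dset (GS g) m \<union> Dset (GS g) (m+1))"
proof -
  obtain j where x: "m = 2*g+2*j" using even_ge[OF assms(1,2)] by auto
  have "Ev (g+j) \<union> Od g (j+1) \<subseteq> Dset (GS g) m \<union> Dset (GS g) (m+1)"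
  proof
    fix s assume "s \<in> Ev (g+j) \<union> Od g (j+1)"
    thus "s \<in> Dset (GS g) m \<union> Dset (GS g) (m+1)"
    proof
      assume "s \<in> Ev (g+j)" hence "s \<in> Dset (GS g) m" unfolding x Ev_def by (intro inD_ev; auto)
      thus ?thesis by simp
    next
      assume "s \<in> Od g (j+1)" hence "s \<in> Dset (GS g) (m+1)" unfolding x Od_def by (intro inD_od; auto; presburger)
      thus ?thesis by simp
    qed
  qed
  from lowerEO[OF this] show ?thesis using x fin_D by simp
qed

lemma L5: assumes "odd m1" "m1 \<in> GS g" "even m2" "m1 < m2"
  shows "m2 div 2 + 1 + (m1+1-2*g) div 2 \<le> card (Dset (GS g) m1 \<union> Dset (GS g) m2)"
proof -
  obtain j where x: "m1 = 2*g+2*j+1" using odd_GS[OF assms(1,2)] by blast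
  obtain c where c: "m2 = 2*c" using assms(3) by (blast elim: evenE)
  have "Ev c \<union> Od g (j+1) \<subseteq> Dset (GS g) m1 \<union> Dset (GS g) m2"
  proof
    fix s assume "s \<in> Ev c \<union> Od g (j+1)"
    thus "s \<in> Dset (GS g) m1 \<union> Dset (GS g) m2"
    proof
      assume "s \<in> Ev c" hence "s \<in> Dset (GS g) m2" unfolding c Ev_def by (intro inD_ev; auto)
      thus ?thesis by simp
    next
      assume "s \<in> Od g (j+1)" hence "s \<in> Dset (GS g) m1" unfolding x Od_def by (intro inD_od; auto; presburger)
      thus ?thesis by simp
    qed
  qed
  from lowerEO[OF this] show ?thesis using x c fin_D by simp
qed



lemma LB:
  assumes g: "g \<ge> 2" and m: "2*g \<le> m" "m \<le> m1" "m1 < m2" and G: "m1 \<in> GS g" "m2 \<in> GS g"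
  shows "(if even m \<and> m+4 \<le> 4*g then m+4-2*g else m+3-2*g) \<le> card (Dset (GS g) m1 \<union> Dset (GS g) m2)"
proof -
  define c where "c = card (Dset (GS g) m1 \<union> Dset (GS g) m2)"
  have fin: "finite (Dset (GS g) m1 \<union> Dset (GS g) m2)" using fin_D by blast
  have c1: "card (Dset (GS g) m1) \<le> c" unfolding c_def by (rule card_mono[OF fin]) auto
  have c2: "card (Dset (GS g) m2) \<le> c" unfolding c_def by (rule card_mono[OF fin]) auto
  have "(if even m \<and> m+4 \<le> 4*g then m+4-2*g else m+3-2*g) \<le> c"
  proof (cases "odd m2")
    case o2: True
    have h1: "m2+1-2*g \<le> c" using L1[OF o2 G(2)] c2 by linarith
    show ?thesis
    proof (cases "m2 = m+1 \<and> even m")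
      case True
      hence "m1 = m" using m by linarith
      hence "m+2-g \<le> c" using L4[of m g] True m unfolding c_def \<open>m1 = m\<close> by simp
      thus ?thesis using g m h1 by auto
    next
      case False
      hence "m+2 \<le> m2 \<and> (even m \<longrightarrow> m+3 \<le> m2)" using m o2 by presburger
      thus ?thesis using h1 m by auto
    qed
  next
    case e2: False
    hence e2: "even m2" by simp
    show ?thesis
    proof (cases "odd m1")
      case o1: True
      have h: "m2 div 2 + 1 + (m1+1-2*g) div 2 \<le> c" using L5[OF o1 G(1) e2 m(3)] c_def by simp
      obtain j where j: "m1 = 2*g+2*j+1" using odd_GS[OF o1 G(1)] by blast
      obtain t where t: "m2 = 2*t" using e2 by (blast elim: evenE)
      have "g+j+1 \<le> t" using j t m(3) by linarith
      moreover have "(m1+1-2*g) div 2 = j+1" using j by simp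
      moreover have "m2 div 2 = t" using t by simp
      ultimately have "g+2*j+3 \<le> c" using h by linarith
      thus ?thesis using j g m by auto
    next
      case False
      hence e1: "even m1" by simp
      obtain t where t: "m2 = 2*t" using e2 by (blast elim: evenE)
      obtain s where s: "m1 = 2*s" using e1 by (blast elim: evenE)
      have ts: "s+1 \<le> t" using s t m(3) by linarith
      show ?thesis
      proof (cases "4*g \<le> m2")
        case True
        have "m2+1-2*g \<le> c" using L3[OF e2 True] c2 by linarith
        thus ?thesis using True m s t ts by auto
      next
        case False
        have "t + 1 \<le> c" using L2[OF e2, of g] c2 t by simp
        thus ?thesis using False m s t ts by auto
      qed
    qed
  qed
  thus ?thesis by (simp add: c_def)
qed

lemma delta_ge:
  assumes "g \<ge> 2" "2*g \<le> m"
  shows "(if even m \<and> m+4 \<le> 4*g then m+4-2*g else m+3-2*g) \<le> delta2 (GS g) m"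
  unfolding delta2_def
proof (rule cInf_greatest)
  have "m+2 \<in> GS g" "m+4 \<in> GS g" using assms by (auto simp: GS_def)
  thus "{card (Dset (GS g) m1 \<union> Dset (GS g) m2) |m1 m2. m \<le> m1 \<and> m1 < m2 \<and> m1 \<in> GS g \<and> m2 \<in> GS g} \<noteq> {}"
    by fastforce
next
  fix x assume "x \<in> {card (Dset (GS g) m1 \<union> Dset (GS g) m2) |m1 m2. m \<le> m1 \<and> m1 < m2 \<and> m1 \<in> GS g \<and> m2 \<in> GS g}"
  then obtain m1 m2 where "x = card (Dset (GS g) m1 \<union> Dset (GS g) m2)" "m \<le> m1" "m1 < m2" "m1 \<in> GS g" "m2 \<in> GS g" by blast
  thus "(if even m \<and> m+4 \<le> 4*g then m+4-2*g else m+3-2*g) \<le> x" using LB[OF assms(1,2)] by blast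
qed

lemma delta_le:
  assumes "m \<le> a" "a < b" "a \<in> S" "b \<in> S" "card (Dset S a \<union> Dset S b) \<le> u"
  shows "delta2 S m \<le> u"
proof -
  have "delta2 S m \<le> card (Dset S a \<union> Dset S b)" unfolding delta2_def
    by (rule cInf_lower) (use assms in blast, simp)
  thus ?thesis using assms(5) by linarith
qed

lemma D_odd: assumes "g \<ge> 2" shows "delta2 (GS g) (2*g+2*k+1) = 2*k+4"
proof (rule antisym)
  show "delta2 (GS g) (2*g+2*k+1) \<le> 2*k+4"
    by (rule delta_le[of _ "2*g+2*k+1" "2*g+2*k+3" _ _, OF _ _ _ _ UB1]) (auto simp: GS_def)
  show "2*k+4 \<le> delta2 (GS g) (2*g+2*k+1)" using delta_ge[OF assms, of "2*g+2*k+1"] by simp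
qed

lemma D_even: assumes "g \<ge> 2" "k \<le> g - 2" shows "delta2 (GS g) (2*g+2*k) = 2*k+4"
proof (rule antisym)
  show "delta2 (GS g) (2*g+2*k) \<le> 2*k+4"
    by (rule delta_le[of _ "2*g+2*k+1" "2*g+2*k+3" _ _, OF _ _ _ _ UB1]) (auto simp: GS_def)
  have "2*k+4 \<le> 2*g" using assms by linarith
  thus "2*k+4 \<le> delta2 (GS g) (2*g+2*k)" using delta_ge[OF assms(1), of "2*g+2*k"] assms by simp
qed

lemma D_4g2: assumes "g \<ge> 2" shows "delta2 (GS g) (4*g-2) = 2*g+1"
proof (rule antisym)
  show "delta2 (GS g) (4*g-2) \<le> 2*g+1"
    by (rule delta_le[of _ "4*g-2" "4*g" _ _, OF _ _ _ _ UB2]) (use assms in \<open>auto simp: GS_def\<close>)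
  show "2*g+1 \<le> delta2 (GS g) (4*g-2)" using delta_ge[OF assms, of "4*g-2"] assms by auto
qed

lemma D_big: assumes "g \<ge> 2" "2*g \<le> t" shows "delta2 (GS g) (2*t) = 2*t+3-2*g"
proof (rule antisym)
  show "delta2 (GS g) (2*t) \<le> 2*t+3-2*g"
    by (rule delta_le[of _ "2*t" "2*t+2" _ _, OF _ _ _ _ UB3]) (use assms in \<open>auto simp: GS_def\<close>)
  show "2*t+3-2*g \<le> delta2 (GS g) (2*t)" using delta_ge[OF assms(1), of "2*t"] assms by auto
qed

lemma D_large: assumes "g \<ge> 2" "4*g - 1 \<le> m" shows "int (delta2 (GS g) m) = int m + 3 - 2 * int g"
proof (cases "even m")
  case True
  then obtain t where t: "m = 2*t" by (blast elim: evenE)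
  have "2*g \<le> t" using assms t by linarith
  thus ?thesis using D_big[OF assms(1)] t by auto
next
  case False
  then obtain a where a: "m = 2*a+1" by (blast elim: oddE)
  have "m = 2*g + 2*(a-g) + 1" using a assms by linarith
  thus ?thesis using D_odd[OF assms(1), of "a-g"] assms by auto
qed

lemma genus_GS: "genus (GS g) = g"
proof -
  have "UNIV - GS g = (\<lambda>i. 2*i+1) ` {..<g}"
  proof
    show "UNIV - GS g \<subseteq> (\<lambda>i. 2*i+1) ` {..<g}"
    proof
      fix n assume "n \<in> UNIV - GS g"
      hence n: "odd n" "n < 2*g" by (auto simp: GS_def)
      then obtain i where "n = 2*i+1" by (blast elim: oddE)
      thus "n \<in> (\<lambda>i. 2*i+1) ` {..<g}" using n by auto
    qed
  qed (auto simp: GS_def)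
  moreover have "inj_on (\<lambda>i::nat. 2*i+1) {..<g}" by (auto simp: inj_on_def)
  ultimately show ?thesis unfolding genus_def by (simp add: card_image)
qed

lemma conductor_GS: assumes "g \<ge> 1" shows "conductor (GS g) = 2*g"
  unfolding conductor_def
proof (rule Least_equality)
  show "\<forall>n\<ge>2*g. n \<in> GS g" by (auto simp: GS_def)
next
  fix c assume c: "\<forall>n\<ge>c. n \<in> GS g"
  show "2*g \<le> c"
  proof (rule ccontr)
    assume "\<not> 2*g \<le> c"
    hence "2*g - 1 \<ge> c" by linarith
    hence "2*g-1 \<in> GS g" using c by blast
    moreover have "odd (2*g-1)" using assms by simp
    ultimately show False using assms by (auto simp: GS_def)
  qed
qed

lemma FR_GS: assumes "g \<ge> 2" shows "FengRao2 (GS g) = 2"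
proof -
  have c: "conductor (GS g) = 2*g" using conductor_GS assms by simp
  show ?thesis
    unfolding FengRao2_def c genus_GS
  proof (rule the_equality)
    show "\<forall>m. 2 * (2 * g) - 1 \<le> m \<longrightarrow> int (delta2 (GS g) m) = int m + 1 - 2 * int g + 2"
      using D_large[OF assms] by auto
  next
    fix e assume "\<forall>m. 2 * (2 * g) - 1 \<le> m \<longrightarrow> int (delta2 (GS g) m) = int m + 1 - 2 * int g + e"
    hence "int (delta2 (GS g) (4*g-1)) = int (4*g-1) + 1 - 2 * int g + e" by auto
    thus "e = 2" using D_large[OF assms, of "4*g-1"] by auto
  qed
qed

theorem theorem5p3:
  fixes g :: nat
  assumes "g \<ge> 2"
  defines "\<Gamma> \<equiv> semigroup2 2 (2 * g + 1)"
  defines "G \<equiv> (\<lambda>m::nat. int m + 1 - 2 * int g + FengRao2 \<Gamma>)"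
  shows "(\<forall>k. int (delta2 \<Gamma> (2 * g + 2 * k + 1)) = G (2 * g + 2 * k + 1))
       \<and> (\<forall>k. k \<le> g - 2 \<longrightarrow> int (delta2 \<Gamma> (2 * g + 2 * k)) = G (2 * g + 2 * k) + 1)
       \<and> delta2 \<Gamma> (4 * g - 2) = 2 * g + 1
       \<and> int (2 * g + 1) = G (4 * g - 2)"
proof -
  have Gm: "\<Gamma> = GS g" unfolding \<Gamma>_def by (rule GS_eq)
  have FR: "FengRao2 (GS g) = 2" using FR_GS[OF assms(1)] by simp
  show ?thesis unfolding G_def Gm FR
    using D_odd[OF assms(1)] D_even[OF assms(1)] D_4g2[OF assms(1)] assms(1) by auto
qed

end
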